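(* Let $A,B$ be finite nonempty subsets of an abelian group $\mathbf G$ and $k\ge1$ an integer. Then $$R^{(k)}_B[A]\ge\frac{|B|^{2k}}{\lambda_1^2(A,B,k)}\quad\text{and}\quad R^{(k)}_B[A]\ge\frac{|B|^{2k}}{\mathsf E_{2k+1}(A,B)^{1/2}}.$$ Moreover, if $A_1\subseteq A$ and $B^{(y)}\subseteq B^k$ ($y\in A_1$) is an arbitrary family of sets, then for each choice of sign $$\Big|\bigcup_{y\in A_1}\big(B^{(y)}\pm\Delta(y)\big)\Big|\ge\frac{\big(\sum_{y\in A_1}|B^{(y)}|\big)^2}{\mathsf E_{k+1}(A,B)}.$$
   Context: $R^{(k)}_B[A]=\min_{\emptyset\ne Z\subseteq A}|B^k+\Delta(Z)|/|Z|$, where $\Delta(Z)=\{(z,\dots,z)\in\mathbf G^k:z\in Z\}$ and $\Delta(y)=\Delta(\{y\})$; sums in $\mathbf G^k$ are coordinatewise. $(X\circ X)(x)=|\{(a,b)\in X^2:b-a=x\}|$ and $\mathsf E_j(A,B)=\sum_x(A\circ A)(x)(B\circ B)(x)^{j-1}$. $\lambda_1(A,B,k)$ is the largest singular value of the real matrix $\mathbf M$ with rows indexed by $x=(x_1,\dots,x_k)\in B^k-\Delta(A)$ and columns by $y\in A$, with entries $\mathbf M(x,y)=A(y)B(y+x_1)\cdots B(y+x_k)$ (indicator functions), i.e. $\lambda_1=\max_{w\ne0}\|\mathbf Mw\|_2/\|w\|_2$; equivalently $\lambda_1^2=\max\{\sum_s(w\circ w)(s)(B\circ B)(s)^k:\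 \|w\|_2=1,\ \mathrm{supp}\,w\subseteq A\}$ with $(w\circ w)(s)=\sum_y w(y)w(y+s)$. *)

theory Defs
  imports Main "HOL-Library.FuncSet" Complex_Main
begin

text \<open>k-tuples over G are modelled as extensional functions on {..<k}.\<close>

definition tpow :: "nat \<Rightarrow> 'a set \<Rightarrow> (nat \<Rightarrow> 'a) set" where
  "tpow k S = PiE {..<k} (\<lambda>_. S)"

definition diag :: "nat \<Rightarrow> 'a \<Rightarrow> (nat \<Rightarrow> 'a)" where
  "diag k z = restrict (\<lambda>_. z) {..<k}"

definition tadd :: "nat \<Rightarrow> (nat \<Rightarrow> 'a::ab_group_add) \<Rightarrow> (nat \<Rightarrow> 'a) \<Rightarrow> (nat \<Rightarrow> 'a)" where
  "tadd k x y = restrict (\<lambda>i. x i + y i) {..<k}"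

definition tsub :: "nat \<Rightarrow> (nat \<Rightarrow> 'a::ab_group_add) \<Rightarrow> (nat \<Rightarrow> 'a) \<Rightarrow> (nat \<Rightarrow> 'a)" where
  "tsub k x y = restrict (\<lambda>i. x i - y i) {..<k}"

definition tsumset :: "nat \<Rightarrow> (nat \<Rightarrow> 'a::ab_group_add) set \<Rightarrow> (nat \<Rightarrow> 'a) set \<Rightarrow> (nat \<Rightarrow> 'a) set" where
  "tsumset k X Y = {tadd k x y | x y. x \<in> X \<and> y \<in> Y}"

definition tdiffset :: "nat \<Rightarrow> (nat \<Rightarrow> 'a::ab_group_add) set \<Rightarrow> (nat \<Rightarrow> 'a) set \<Rightarrow> (nat \<Rightarrow> 'a) set" where
  "tdiffset k X Y = {tsub k x y | x y. x \<in> X \<and> y \<in> Y}"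

definition Delta :: "nat \<Rightarrow> 'a set \<Rightarrow> (nat \<Rightarrow> 'a) set" where
  "Delta k Z = diag k ` Z"

definition Rk :: "nat \<Rightarrow> 'a::ab_group_add set \<Rightarrow> 'a set \<Rightarrow> real" where
  "Rk k B A = Min {real (card (tsumset k (tpow k B) (Delta k Z))) / real (card Z) | Z. Z \<noteq> {} \<and> Z \<subseteq> A}"

definition circ :: "'a::ab_group_add set \<Rightarrow> 'a \<Rightarrow> nat" where
  "circ X x = card {(a, b). a \<in> X \<and> b \<in> X \<and> b - a = x}"

definition Ej :: "nat \<Rightarrow> 'a::ab_group_add set \<Rightarrow> 'a set \<Rightarrow> real" where
  "Ej j A B = (\<Sum>x\<in>{b - a | a b. a \<in> A \<and> b \<in> A}. real (circ A x) * real (circ B x) ^ (j - 1))"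

definition Mrows :: "nat \<Rightarrow> 'a::ab_group_add set \<Rightarrow> 'a set \<Rightarrow> (nat \<Rightarrow> 'a) set" where
  "Mrows k A B = tdiffset k (tpow k B) (Delta k A)"

definition Mentry :: "nat \<Rightarrow> 'a::ab_group_add set \<Rightarrow> 'a set \<Rightarrow> (nat \<Rightarrow> 'a) \<Rightarrow> 'a \<Rightarrow> real" where
  "Mentry k A B x y = (if y \<in> A then 1 else 0) * (\<Prod>i<k. if y + x i \<in> B then 1 else 0)"

definition lambda1 :: "'a::ab_group_add set \<Rightarrow> 'a set \<Rightarrow> nat \<Rightarrow> real" where
  "lambda1 A B k = Sup {sqrt (\<Sum>x\<in>Mrows k A B. (\<Sum>y\<in>A. Mentry k A B x y * w y)^2) / sqrt (\<Sum>y\<in>A. (w y)^2)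
                        | w. \<exists>y\<in>A. w y \<noteq> 0}"

end

theory Submission imports Defs "HOL-Analysis.Convex" begin

lemma coll_CS:
  fixes P :: "'b set" and h :: "'b \<Rightarrow> 'c"
  assumes "finite P"
  shows "real (card P)^2 \<le> real (card (h ` P)) * real (card {(p,q). p \<in> P \<and> q \<in> P \<and> h p = h q})"
proof -
  define c where "c v = card {p\<in>P. h p = v}" for v
  have 1: "real (card P) = (\<Sum>v\<in>h ` P. real (c v))"
  proof -
    have "(\<Sum>p\<in>P. 1::real) = (\<Sum>v\<in>h ` P. \<Sum>p\<in>{p\<in>P. h p = v}. 1)"
      by (rule sum.group[symmetric]) (use assms in auto)
    then show ?thesis by (simp add: c_def)
  qed
  have eqS: "{(p,q). p \<in> P \<and> q \<in> P \<and> h p = h q} = Sigma P (\<lambda>p. {q\<in>P. h q = h p})" by auto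
  have 2: "card {(p,q). p \<in> P \<and> q \<in> P \<and> h p = h q} = (\<Sum>p\<in>P. c (h p))"
    unfolding eqS c_def using assms by simp
  have 3: "(\<Sum>p\<in>P. real (c (h p))) = (\<Sum>v\<in>h ` P. (\<Sum>p\<in>{p\<in>P. h p = v}. real (c (h p))))"
    by (rule sum.group[symmetric]) (use assms in auto)
  also have "\<dots> = (\<Sum>v\<in>h ` P. real (c v)^2)"
    by (rule sum.cong) (auto simp: power2_eq_square c_def)
  finally have 4: "(\<Sum>p\<in>P. real (c (h p))) = (\<Sum>v\<in>h ` P. real (c v)^2)" .
  have 5: "real (card {(p,q). p \<in> P \<and> q \<in> P \<and> h p = h q}) = (\<Sum>v\<in>h ` P. real (c v)^2)"
    unfolding 2 of_nat_sum 4 ..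
  show ?thesis
    using sum_squared_le_sum_of_squares[of "\<lambda>v. real (c v)" "h ` P"]
    unfolding 1 5 by (simp add: mult.commute)
qed

lemma circ_neg: "circ X (-x) = circ X x"
proof -
  have "{(a, b). a \<in> X \<and> b \<in> X \<and> b - a = -x} = (\<lambda>(a,b). (b,a)) ` {(a, b). a \<in> X \<and> b \<in> X \<and> b - a = x}"
    by (auto simp: image_def algebra_simps)
  moreover have "inj_on (\<lambda>(a,b). (b,a)) S" for S :: "('a\<times>'a) set" by (auto simp: inj_on_def)
  ultimately show ?thesis unfolding circ_def by (simp add: card_image)
qed

lemma regroup:
  fixes F :: "'a::ab_group_add \<Rightarrow> real"
  assumes "finite A"
  shows "(\<Sum>p\<in>A\<times>A. F (snd p - fst p)) = (\<Sum>x\<in>{b - a | a b. a \<in> A \<and> b \<in> A}. real (circ A x) * F x)"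
proof -
  let ?D = "{b - a | a b. a \<in> A \<and> b \<in> A}"
  have "?D \<subseteq> (\<lambda>p. snd p - fst p) ` (A\<times>A)" by (auto simp: image_def)
  then have fD: "finite ?D" by (rule finite_subset[OF _ finite_imageI]) (use assms in auto)
  have "(\<Sum>p\<in>A\<times>A. F (snd p - fst p)) = (\<Sum>x\<in>?D. \<Sum>p\<in>{p\<in>A\<times>A. snd p - fst p = x}. F (snd p - fst p))"
    using assms fD by (subst sum.group[symmetric, of "A\<times>A" ?D "\<lambda>p. snd p - fst p"]) (auto, blast)
  also have "\<dots> = (\<Sum>x\<in>?D. real (circ A x) * F x)"
  proof (rule sum.cong)
    fix x assume "x \<in> ?D"
    have e1: "{p\<in>A\<times>A. snd p - fst p = x} = {(a, b). a \<in> A \<and> b \<in> A \<and> b - a = x}" by auto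
    have "(\<Sum>p\<in>{p\<in>A\<times>A. snd p - fst p = x}. F (snd p - fst p)) = (\<Sum>p\<in>{p\<in>A\<times>A. snd p - fst p = x}. F x)"
      by (rule sum.cong) auto
    then show "(\<Sum>p\<in>{p\<in>A\<times>A. snd p - fst p = x}. F (snd p - fst p)) = real (circ A x) * F x"
      by (simp add: circ_def e1)
  qed simp
  finally show ?thesis .
qed

lemma count_pairs:
  fixes B :: "'a::ab_group_add set"
  assumes "finite B"
  shows "card {(b,b'). b \<in> tpow k B \<and> b' \<in> tpow k B \<and> (\<forall>i<k. b' i - b i = d)} \<le> circ B d ^ k"
proof -
  let ?C = "{(a, b). a \<in> B \<and> b \<in> B \<and> b - a = d}"
  let ?S = "{(b,b'). b \<in> tpow k B \<and> b' \<in> tpow k B \<and> (\<forall>i<k. b' i - b i = d)}"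
  define f :: "(nat \<Rightarrow> 'a) \<times> (nat \<Rightarrow> 'a) \<Rightarrow> nat \<Rightarrow> 'a \<times> 'a" where "f = (\<lambda>(b,b'). restrict (\<lambda>i. (b i, b' i)) {..<(k::nat)})"
  have fC: "finite ?C" by (rule finite_subset[of _ "B\<times>B"]) (use assms in auto)
  have inj: "inj_on f ?S"
  proof (rule inj_onI)
    fix p q assume p: "p \<in> ?S" and q: "q \<in> ?S" and fe: "f p = f q"
    obtain b b' where pb: "p = (b,b')" by (cases p)
    obtain c c' where qc: "q = (c,c')" by (cases q)
    have b: "b \<in> PiE {..<k} (\<lambda>_. B)" "b' \<in> PiE {..<k} (\<lambda>_. B)" using p pb by (auto simp: tpow_def)
    have c: "c \<in> PiE {..<k} (\<lambda>_. B)" "c' \<in> PiE {..<k} (\<lambda>_. B)" using q qc by (auto simp: tpow_def)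
    have e: "b i = c i \<and> b' i = c' i" if "i \<in> {..<k}" for i
    proof -
      have "f p i = f q i" using fe by simp
      then show ?thesis using that by (simp add: f_def pb qc)
    qed
    have "b = c" by (rule PiE_ext[OF b(1) c(1)]) (use e in blast)
    moreover have "b' = c'" by (rule PiE_ext[OF b(2) c(2)]) (use e in blast)
    ultimately show "p = q" by (simp add: pb qc)
  qed
  have img: "f ` ?S \<subseteq> PiE {..<k} (\<lambda>_. ?C)"
  proof
    fix z assume "z \<in> f ` ?S"
    then obtain b b' where bb: "(b,b') \<in> ?S" "z = f (b,b')" by auto
    have "b i \<in> B" "b' i \<in> B" "b' i - b i = d" if "i < k" for i
      using bb(1) that by (auto simp: tpow_def PiE_iff)
    then show "z \<in> PiE {..<k} (\<lambda>_. ?C)" unfolding bb(2) f_def by (auto simp: PiE_iff)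
  qed
  have "card ?S \<le> card (PiE {..<k} (\<lambda>_. ?C))"
    by (rule card_inj_on_le[OF inj img]) (use fC in \<open>simp add: finite_PiE\<close>)
  also have "\<dots> = circ B d ^ k" by (simp add: card_PiE circ_def)
  finally show ?thesis .
qed

lemma finite_tpow: "finite B \<Longrightarrow> finite (tpow k B)"
  by (simp add: tpow_def finite_PiE)

lemma card_tpow: "card (tpow k B) = card B ^ k"
  by (simp add: tpow_def card_PiE)

lemma coll_bound:
  fixes h :: "'a::ab_group_add \<times> (nat \<Rightarrow> 'a) \<Rightarrow> 'c"
  assumes "finite S" "finite B" "P \<subseteq> S \<times> tpow k B"
    and "\<And>p q. p\<in>P \<Longrightarrow> q\<in>P \<Longrightarrow> h p = h q \<Longrightarrow> (\<forall>i<k. snd q i - snd p i = \<sigma> (fst p) (fst q))"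
  shows "real (card {(p,q). p\<in>P \<and> q\<in>P \<and> h p = h q}) \<le> (\<Sum>pr\<in>S\<times>S. real (circ B (\<sigma> (fst pr) (snd pr)))^k)"
proof -
  define D where "D d = {(b,b'). b \<in> tpow k B \<and> b' \<in> tpow k B \<and> (\<forall>i<k. b' i - b i = d)}" for d
  let ?Q = "Sigma (S\<times>S) (\<lambda>pr. D (\<sigma> (fst pr) (snd pr)))"
  let ?C = "{(p,q). p\<in>P \<and> q\<in>P \<and> h p = h q}"
  define F where "F = (\<lambda>(p::'a \<times> (nat \<Rightarrow> 'a),q::'a \<times> (nat \<Rightarrow> 'a)). ((fst p, fst q),(snd p, snd q)))"
  have fD: "finite (D d)" for d
    by (rule finite_subset[of _ "tpow k B \<times> tpow k B"]) (auto simp: D_def finite_tpow assms)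
  have inj: "inj_on F ?C" unfolding F_def by (auto simp: inj_on_def prod_eq_iff)
  have img: "F ` ?C \<subseteq> ?Q"
  proof
    fix z assume "z \<in> F ` ?C"
    then obtain p q where pq: "p \<in> P" "q \<in> P" "h p = h q" "z = F (p,q)" by auto
    have "p \<in> S \<times> tpow k B" "q \<in> S \<times> tpow k B" using pq assms(3) by auto
    moreover have "\<forall>i<k. snd q i - snd p i = \<sigma> (fst p) (fst q)" using assms(4)[OF pq(1-3)] .
    ultimately show "z \<in> ?Q" unfolding pq(4) F_def D_def by (auto simp: mem_Times_iff)
  qed
  have "card ?C \<le> card ?Q"
    by (rule card_inj_on_le[OF inj img]) (use assms fD in simp)
  also have "card ?Q = (\<Sum>pr\<in>S\<times>S. card (D (\<sigma> (fst pr) (snd pr))))"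
    using assms fD by simp
  finally have "real (card ?C) \<le> real (\<Sum>pr\<in>S\<times>S. card (D (\<sigma> (fst pr) (snd pr))))"
    by (simp only: of_nat_le_iff)
  also have "\<dots> = (\<Sum>pr\<in>S\<times>S. real (card (D (\<sigma> (fst pr) (snd pr)))))" by (simp only: of_nat_sum)
  also have "\<dots> \<le> (\<Sum>pr\<in>S\<times>S. real (circ B (\<sigma> (fst pr) (snd pr)))^k)"
  proof (rule sum_mono)
    fix pr
    have "card (D (\<sigma> (fst pr) (snd pr))) \<le> circ B (\<sigma> (fst pr) (snd pr)) ^ k"
      unfolding D_def by (rule count_pairs[OF assms(2)])
    then show "real (card (D (\<sigma> (fst pr) (snd pr)))) \<le> real (circ B (\<sigma> (fst pr) (snd pr)))^k"
      by (metis of_nat_le_iff of_nat_power)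
  qed
  finally show ?thesis .
qed
lemma prod_ind: "(\<Prod>i<(k::nat). if P i then (1::real) else 0) = (if \<forall>i<k. P i then 1 else 0)"
  by (induction k) (auto simp: lessThan_Suc less_Suc_eq)

lemma Mentry_eq: "Mentry k A B x y = (if y \<in> A \<and> (\<forall>i<k. y + x i \<in> B) then 1 else 0)"
  unfolding Mentry_def prod_ind by auto

lemma lambda1_bdd:
  assumes "finite A" "finite B"
  shows "bdd_above {sqrt (\<Sum>x\<in>Mrows k A B. (\<Sum>y\<in>A. Mentry k A B x y * w y)^2) / sqrt (\<Sum>y\<in>A. (w y)^2)
                        | w. \<exists>y\<in>A. w y \<noteq> 0}"
proof (rule bdd_aboveI, clarify)
  fix w :: "'a \<Rightarrow> real"
  let ?C = "real (card (Mrows k A B)) * real (card A)"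
  let ?W = "\<Sum>y\<in>A. (w y)^2"
  have "(\<Sum>x\<in>Mrows k A B. (\<Sum>y\<in>A. Mentry k A B x y * w y)^2) \<le> (\<Sum>x\<in>Mrows k A B. real (card A) * ?W)"
  proof (rule sum_mono)
    fix x
    have "(\<Sum>y\<in>A. Mentry k A B x y * w y)^2 \<le> (\<Sum>y\<in>A. (Mentry k A B x y)^2) * ?W"
      by (rule Cauchy_Schwarz_ineq_sum)
    also have "\<dots> \<le> real (card A) * ?W"
    proof (rule mult_right_mono)
      have "(\<Sum>y\<in>A. (Mentry k A B x y)^2) \<le> (\<Sum>y\<in>A. 1)"
        by (rule sum_mono) (simp add: Mentry_eq)
      then show "(\<Sum>y\<in>A. (Mentry k A B x y)^2) \<le> real (card A)" by simp
    qed (simp add: sum_nonneg)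
    finally show "(\<Sum>y\<in>A. Mentry k A B x y * w y)^2 \<le> real (card A) * ?W" .
  qed
  also have "\<dots> = ?C * ?W" by simp
  finally have "sqrt (\<Sum>x\<in>Mrows k A B. (\<Sum>y\<in>A. Mentry k A B x y * w y)^2) \<le> sqrt (?C * ?W)"
    using real_sqrt_le_mono by blast
  then have "sqrt (\<Sum>x\<in>Mrows k A B. (\<Sum>y\<in>A. Mentry k A B x y * w y)^2) / sqrt ?W \<le> sqrt (?C * ?W) / sqrt ?W"
    by (rule divide_right_mono) (auto simp: sum_nonneg)
  also have "\<dots> \<le> sqrt ?C"
    by (simp add: real_sqrt_mult)
  finally show "sqrt (\<Sum>x\<in>Mrows k A B. (\<Sum>y\<in>A. Mentry k A B x y * w y)^2) / sqrt ?W \<le> sqrt ?C" .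
qed

lemma ratio_bound:
  fixes U c Z K L :: real
  assumes "Z^2 * K \<le> U * c" "c \<le> Z * L" "Z > 0" "U \<ge> 0" "L \<ge> 0"
  shows "K / L \<le> U / Z"
proof (cases "L = 0")
  case True then show ?thesis using assms by simp
next
  case False
  then have L: "L > 0" using assms by simp
  have "Z^2 * K \<le> U * (Z * L)" using assms(1) mult_left_mono[OF assms(2) assms(4)] by linarith
  then have "Z * K \<le> U * L" using assms(3) by (simp add: power2_eq_square algebra_simps)
  then show ?thesis using L assms(3) by (simp add: divide_simps mult.commute)
qed

lemma ratio_bound2:
  fixes U c P E :: real
  assumes "P^2 \<le> U * c" "c \<le> E" "U \<ge> 0" "E \<ge> 0"
  shows "P^2 / E \<le> U"
proof (cases "E = 0")
  case True then show ?thesis using assms by simp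
next
  case False
  have "P^2 \<le> U * E" using assms(1) mult_left_mono[OF assms(2) assms(3)] by linarith
  then show ?thesis using False assms by (simp add: divide_simps mult.commute)
qed





definition hadd :: "nat \<Rightarrow> 'a::ab_group_add \<times> (nat \<Rightarrow> 'a) \<Rightarrow> nat \<Rightarrow> 'a" where
  "hadd k = (\<lambda>(y,b). tadd k b (diag k y))"
definition hsub :: "nat \<Rightarrow> 'a::ab_group_add \<times> (nat \<Rightarrow> 'a) \<Rightarrow> nat \<Rightarrow> 'a" where
  "hsub k = (\<lambda>(y,b). tsub k b (diag k y))"

lemma hadd_eq: "hadd k p = hadd k q \<Longrightarrow> \<forall>i<k. snd q i - snd p i = fst p - fst q"
proof (intro allI impI)
  fix i assume that: "hadd k p = hadd k q" and i: "i < k"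
  obtain y b where p: "p = (y,b)" by (cases p)
  obtain y' b' where q: "q = (y',b')" by (cases q)
  have "hadd k p i = hadd k q i" using that by simp
  then have "b i + y = b' i + y'" using i by (simp add: p q hadd_def tadd_def diag_def)
  then show "snd q i - snd p i = fst p - fst q" by (simp add: p q algebra_simps)
qed

lemma hsub_eq: "hsub k p = hsub k q \<Longrightarrow> \<forall>i<k. snd q i - snd p i = fst q - fst p"
proof (intro allI impI)
  fix i assume that: "hsub k p = hsub k q" and i: "i < k"
  obtain y b where p: "p = (y,b)" by (cases p)
  obtain y' b' where q: "q = (y',b')" by (cases q)
  have "hsub k p i = hsub k q i" using that by simp
  then have "b i - y = b' i - y'" using i by (simp add: p q hsub_def tsub_def diag_def)
  then show "snd q i - snd p i = fst q - fst p" by (simp add: p q algebra_simps)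
qed

lemma Esum: "finite A \<Longrightarrow> (\<Sum>pr\<in>A\<times>A. real (circ B (snd pr - fst pr))^j) = Ej (j+1) A B"
  unfolding Ej_def using regroup[of A "\<lambda>x. real (circ B x)^j"] by simp

lemma negsum: "(\<Sum>pr\<in>S\<times>S. real (circ B (fst pr - snd pr))^j) = (\<Sum>pr\<in>S\<times>S. real (circ B (snd pr - fst pr))^j)"
proof (rule sum.cong)
  fix pr :: "'a \<times> 'a"
  have "circ B (fst pr - snd pr) = circ B (- (snd pr - fst pr))" by simp
  also have "\<dots> = circ B (snd pr - fst pr)" by (rule circ_neg)
  finally show "real (circ B (fst pr - snd pr))^j = real (circ B (snd pr - fst pr))^j" by simp
qed simp

lemma Enonneg: "Ej j A B \<ge> 0" unfolding Ej_def by (rule sum_nonneg) simp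

lemma tsum1: "tsumset k X (Delta k {y}) = (\<lambda>b. tadd k b (diag k y)) ` X"
  unfolding tsumset_def Delta_def by blast

lemma tdiff1: "tdiffset k X (Delta k {y}) = (\<lambda>b. tsub k b (diag k y)) ` X"
  unfolding tdiffset_def Delta_def by blast

lemma U_add: "(\<Union>y\<in>A1. tsumset k (Bf y) (Delta k {y})) = hadd k ` Sigma A1 Bf"
  unfolding tsum1 hadd_def by force

lemma U_sub: "(\<Union>y\<in>A1. tdiffset k (Bf y) (Delta k {y})) = hsub k ` Sigma A1 Bf"
  unfolding tdiff1 hsub_def by force

lemma U_Z: "tsumset k X (Delta k Z) = hadd k ` (Z \<times> X)"
  unfolding hadd_def tsumset_def Delta_def by force




lemma CS_Z:
  fixes A B Z :: "'a::ab_group_add set"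
  assumes fZ: "finite Z" and fB: "finite B"
  shows "real (card Z)^2 * real (card B)^(2*k) \<le> real (card (tsumset k (tpow k B) (Delta k Z)))
          * real (card {(p,q). p\<in>Z \<times> tpow k B \<and> q\<in>Z \<times> tpow k B \<and> hadd k p = hadd k q})"
proof -
  have fT: "finite (tpow k B)" using fB by (rule finite_tpow)
  have fP: "finite (Z \<times> tpow k B)" using fZ fT by simp
  have "real (card (Z \<times> tpow k B)) = real (card Z) * real (card B)^k"
    by (simp add: card_cartesian_product card_tpow)
  then have "real (card Z)^2 * real (card B)^(2*k) = real (card (Z \<times> tpow k B))^2"
    by (simp add: power_mult_distrib power_mult mult.commute)
  then show ?thesis unfolding U_Z using coll_CS[OF fP, of "hadd k"] by simp
qed

lemma part2_Z:
  fixes A B Z :: "'a::ab_group_add set"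
  assumes fA: "finite A" and fB: "finite B" and Z: "Z \<noteq> {}" "Z \<subseteq> A"
  shows "real (card B) ^ (2 * k) / sqrt (Ej (2 * k + 1) A B)
          \<le> real (card (tsumset k (tpow k B) (Delta k Z))) / real (card Z)"
proof -
  have fZ: "finite Z" using Z fA finite_subset by blast
  have cZ: "real (card Z) > 0" using Z fZ by (simp add: card_gt_0_iff)
  define coll where "coll = real (card {(p,q). p\<in>Z \<times> tpow k B \<and> q\<in>Z \<times> tpow k B \<and> hadd k p = hadd k q})"
  define c where "c pr = real (circ B (snd pr - fst pr))^k" for pr :: "'a \<times> 'a"
  have "coll \<le> (\<Sum>pr\<in>Z\<times>Z. real (circ B (fst pr - snd pr))^k)"
    unfolding coll_def by (rule coll_bound[OF fZ fB]) (simp, rule hadd_eq)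
  then have c1: "coll \<le> (\<Sum>pr\<in>Z\<times>Z. c pr)" unfolding negsum c_def .
  have "(\<Sum>pr\<in>Z\<times>Z. c pr)^2 \<le> (\<Sum>pr\<in>Z\<times>Z. (c pr)^2) * real (card (Z\<times>Z))"
    by (rule sum_squared_le_sum_of_squares)
  also have "\<dots> \<le> Ej (2*k+1) A B * real (card Z)^2"
  proof (rule mult_mono)
    have "(\<Sum>pr\<in>Z\<times>Z. (c pr)^2) \<le> (\<Sum>pr\<in>A\<times>A. (c pr)^2)"
      by (rule sum_mono2) (use fA Z in auto)
    also have "\<dots> = (\<Sum>pr\<in>A\<times>A. real (circ B (snd pr - fst pr))^(2*k))"
      unfolding c_def by (simp add: power_mult[symmetric] mult.commute)
    also have "\<dots> = Ej (2*k+1) A B" using Esum[OF fA, of B "2*k"] by simp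
    finally show "(\<Sum>pr\<in>Z\<times>Z. (c pr)^2) \<le> Ej (2*k+1) A B" .
    show "real (card (Z\<times>Z)) \<le> real (card Z)^2" by (simp add: card_cartesian_product power2_eq_square)
  qed (auto simp: Enonneg)
  finally have "(\<Sum>pr\<in>Z\<times>Z. c pr)^2 \<le> Ej (2*k+1) A B * real (card Z)^2" .
  then have "sqrt ((\<Sum>pr\<in>Z\<times>Z. c pr)^2) \<le> sqrt (Ej (2*k+1) A B * real (card Z)^2)"
    using real_sqrt_le_mono by blast
  moreover have "(\<Sum>pr\<in>Z\<times>Z. c pr) \<ge> 0" unfolding c_def by (rule sum_nonneg) simp
  ultimately have "(\<Sum>pr\<in>Z\<times>Z. c pr) \<le> real (card Z) * sqrt (Ej (2*k+1) A B)"
    by (simp add: real_sqrt_mult mult.commute)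
  with c1 have c2: "coll \<le> real (card Z) * sqrt (Ej (2*k+1) A B)" by linarith
  show ?thesis
    by (rule ratio_bound[OF CS_Z[OF fZ fB, of k, folded coll_def] c2 cZ]) (simp_all add: Enonneg)
qed




lemma tpow_ext: "b \<in> tpow k B \<Longrightarrow> c \<in> tpow k B \<Longrightarrow> (\<And>i. i < k \<Longrightarrow> b i = c i) \<Longrightarrow> b = c"
  unfolding tpow_def by (rule PiE_ext) auto

lemma part1_Z:
  fixes A B Z :: "'a::ab_group_add set"
  assumes fA: "finite A" and fB: "finite B" and Z: "Z \<noteq> {}" "Z \<subseteq> A"
  shows "real (card B) ^ (2 * k) / (lambda1 A B k)^2
          \<le> real (card (tsumset k (tpow k B) (Delta k Z))) / real (card Z)"
proof -
  have fZ: "finite Z" using Z fA finite_subset by blast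
  have cZ: "real (card Z) > 0" using Z fZ by (simp add: card_gt_0_iff)
  have fT: "finite (tpow k B)" using fB by (rule finite_tpow)
  define P where "P = Z \<times> tpow k B"
  define C where "C = {(p,q). p\<in>P \<and> q\<in>P \<and> hadd k p = hadd k q}"
  define coll where "coll = real (card C)"
  define w :: "'a \<Rightarrow> real" where "w y = (if y \<in> Z then 1 else 0)" for y
  define G where "G x = {y\<in>Z. Mentry k A B x y = 1}" for x
  define Q where "Q = Sigma (Mrows k A B) (\<lambda>x. G x \<times> G x)"
  define F :: "('a \<times> (nat \<Rightarrow> 'a)) \<times> ('a \<times> (nat \<Rightarrow> 'a)) \<Rightarrow> (nat \<Rightarrow> 'a) \<times> 'a \<times> 'a"
    where "F = (\<lambda>(p,q). (tsub k (snd p) (diag k (fst q)), (fst q, fst p)))"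
  have fM: "finite (Mrows k A B)"
  proof -
    have "Mrows k A B \<subseteq> (\<lambda>(x,y). tsub k x y) ` (tpow k B \<times> Delta k A)"
      unfolding Mrows_def tdiffset_def by auto
    moreover have "finite (tpow k B \<times> Delta k A)" using fT fA by (simp add: Delta_def)
    ultimately show ?thesis by (rule finite_subset[OF _ finite_imageI])
  qed
  have fG: "finite (G x)" for x unfolding G_def using fZ by simp
  have fQ: "finite Q" unfolding Q_def using fM fG by simp
  have inj: "inj_on F C"
  proof (rule inj_onI)
    fix pq rs assume pq: "pq \<in> C" and rs: "rs \<in> C" and Fe: "F pq = F rs"
    obtain y b y' b' where pqd: "pq = ((y,b),(y',b'))" by (cases pq) auto
    obtain z c z' c' where rsd: "rs = ((z,c),(z',c'))" by (cases rs) auto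
    have h1: "(y,b) \<in> P" "(y',b') \<in> P" "hadd k (y,b) = hadd k (y',b')" using pq pqd C_def by auto
    have h2: "(z,c) \<in> P" "(z',c') \<in> P" "hadd k (z,c) = hadd k (z',c')" using rs rsd C_def by auto
    have Fe0: "tsub k b (diag k y') = tsub k c (diag k z') \<and> y' = z' \<and> y = z"
      using Fe unfolding F_def pqd rsd by (simp only: case_prod_conv prod.inject fst_conv snd_conv) (elim conjE, hypsubst, simp)
    then have Fe': "tsub k b (diag k y') = tsub k c (diag k z')" "y' = z'" "y = z" by blast+
    have bc: "b i = c i" if "i < k" for i
    proof -
      have "tsub k b (diag k y') i = tsub k c (diag k z') i" using Fe'(1) by simp
      then show ?thesis using that Fe'(2) by (simp add: tsub_def diag_def)
    qed
    have bT: "b \<in> tpow k B" "b' \<in> tpow k B" "c \<in> tpow k B" "c' \<in> tpow k B"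
      using h1 h2 unfolding P_def by auto
    have "b = c" by (rule tpow_ext[OF bT(1) bT(3) bc])
    moreover have "b' = c'"
    proof (rule tpow_ext[OF bT(2) bT(4)])
      fix i assume i: "i < k"
      have "b' i - b i = y - y'" using hadd_eq[OF h1(3)] i by simp
      moreover have "c' i - c i = z - z'" using hadd_eq[OF h2(3)] i by simp
      ultimately have "b' i - b i = c' i - c i" using Fe'(2,3) by simp
      then show "b' i = c' i" using bc[OF i] by simp
    qed
    ultimately show "pq = rs" using Fe' pqd rsd by simp
  qed
  have img: "F ` C \<subseteq> Q"
  proof
    fix u assume "u \<in> F ` C"
    then obtain y b y' b' where h: "(y,b) \<in> P" "(y',b') \<in> P" "hadd k (y,b) = hadd k (y',b')"
      and u: "u = F ((y,b),(y',b'))" unfolding C_def by auto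
    have yA: "y \<in> Z" "y' \<in> Z" "y \<in> A" "y' \<in> A" using h Z(2) unfolding P_def by auto
    have bB: "b \<in> tpow k B" "b' \<in> tpow k B" using h unfolding P_def by auto
    have bBi: "b i \<in> B" "b' i \<in> B" if "i < k" for i using bB that by (auto simp: tpow_def)
    define x where "x = tsub k b (diag k y')"
    have xi: "x i = b i - y'" if "i < k" for i using that by (simp add: x_def tsub_def diag_def)
    have e: "b' i - b i = y - y'" if "i < k" for i using hadd_eq[OF h(3)] that by simp
    have "x \<in> Mrows k A B" unfolding Mrows_def tdiffset_def Delta_def x_def using bB yA by blast
    moreover have "y' \<in> G x" unfolding G_def Mentry_eq using yA bBi xi by simp
    moreover have "y + x i \<in> B" if "i < k" for i
    proof -
      have "y + x i = y + (b i - y')" using xi[OF that] by simp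
      also have "\<dots> = (y - y') + b i" by (simp add: algebra_simps)
      also have "\<dots> = b' i" using e[OF that] by (metis diff_add_cancel)
      finally have "y + x i = b' i" .
      then show ?thesis using bBi(2)[OF that] by simp
    qed
    then have "y \<in> G x" unfolding G_def Mentry_eq using yA by simp
    ultimately show "u \<in> Q" unfolding u F_def Q_def x_def by simp
  qed
  have "card C \<le> card Q" by (rule card_inj_on_le[OF inj img fQ])
  also have "card Q = (\<Sum>x\<in>Mrows k A B. card (G x) * card (G x))"
    unfolding Q_def using fM fG by (simp add: card_cartesian_product)
  finally have "coll \<le> real (\<Sum>x\<in>Mrows k A B. card (G x) * card (G x))"
    unfolding coll_def by (simp only: of_nat_le_iff)
  also have "\<dots> = (\<Sum>x\<in>Mrows k A B. real (card (G x))^2)"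
    by (simp add: power2_eq_square)
  finally have c1: "coll \<le> (\<Sum>x\<in>Mrows k A B. real (card (G x))^2)" .
  have Gsum: "real (card (G x)) = (\<Sum>y\<in>A. Mentry k A B x y * w y)" for x
  proof -
    have "(\<Sum>y\<in>A. Mentry k A B x y * w y) = (\<Sum>y\<in>A. if y \<in> G x then 1 else 0)"
      by (rule sum.cong) (auto simp: G_def w_def Mentry_eq)
    also have "\<dots> = real (card (A \<inter> G x))" using sum.inter_restrict[OF fA, of "\<lambda>_. (1::real)" "G x"] by simp
    also have "A \<inter> G x = G x" using Z(2) unfolding G_def by auto
    finally show ?thesis by simp
  qed
  have Wsum: "(\<Sum>y\<in>A. (w y)^2) = real (card Z)"
  proof -
    have "(\<Sum>y\<in>A. (w y)^2) = (\<Sum>y\<in>A. if y \<in> Z then 1 else 0)"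
      by (rule sum.cong) (auto simp: w_def)
    also have "\<dots> = real (card (A \<inter> Z))" using sum.inter_restrict[OF fA, of "\<lambda>_. (1::real)" Z] by simp
    also have "A \<inter> Z = Z" using Z(2) by auto
    finally show ?thesis .
  qed
  define S where "S = (\<Sum>x\<in>Mrows k A B. (\<Sum>y\<in>A. Mentry k A B x y * w y)^2)"
  have mem: "sqrt S / sqrt (\<Sum>y\<in>A. (w y)^2) \<in> {sqrt (\<Sum>x\<in>Mrows k A B. (\<Sum>y\<in>A. Mentry k A B x y * w y)^2) / sqrt (\<Sum>y\<in>A. (w y)^2)
                        | w. \<exists>y\<in>A. w y \<noteq> 0}"
  proof -
    obtain y0 where "y0 \<in> Z" using Z(1) by blast
    then have "\<exists>y\<in>A. w y \<noteq> 0" using Z(2) by (auto simp: w_def)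
    then show ?thesis unfolding S_def by blast
  qed
  have S0: "S \<ge> 0" unfolding S_def by (rule sum_nonneg) simp
  have le: "sqrt S / sqrt (real (card Z)) \<le> lambda1 A B k"
    unfolding lambda1_def using cSup_upper[OF mem lambda1_bdd[OF fA fB]] Wsum by simp
  have "(sqrt S / sqrt (real (card Z)))^2 \<le> (lambda1 A B k)^2"
    by (rule power_mono[OF le]) (use S0 in simp)
  then have "S / real (card Z) \<le> (lambda1 A B k)^2"
    using S0 by (simp add: power_divide)
  then have "S \<le> real (card Z) * (lambda1 A B k)^2" using cZ by (simp add: divide_simps mult.commute)
  moreover have "coll \<le> S" using c1 Gsum unfolding S_def by simp
  ultimately have c2: "coll \<le> real (card Z) * (lambda1 A B k)^2" by linarith
  have CS: "real (card Z)^2 * real (card B)^(2*k) \<le> real (card (tsumset k (tpow k B) (Delta k Z))) * coll"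
    using CS_Z[OF fZ fB, of k] unfolding coll_def C_def P_def .
  show ?thesis
    by (rule ratio_bound[OF CS c2 cZ]) simp_all
qed




lemma part3:
  fixes A B :: "'a::ab_group_add set"
  assumes fA: "finite A" and fB: "finite B" and A1: "A1 \<subseteq> A" and Bf: "\<forall>y\<in>A1. Bf y \<subseteq> tpow k B"
  shows "real (card (\<Union>y\<in>A1. tsumset k (Bf y) (Delta k {y})))
             \<ge> (\<Sum>y\<in>A1. real (card (Bf y)))^2 / Ej (k + 1) A B
         \<and> real (card (\<Union>y\<in>A1. tdiffset k (Bf y) (Delta k {y})))
             \<ge> (\<Sum>y\<in>A1. real (card (Bf y)))^2 / Ej (k + 1) A B"
proof -
  define P where "P = Sigma A1 Bf"
  have fT: "finite (tpow k B)" using fB by (rule finite_tpow)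
  have fA1: "finite A1" using A1 fA finite_subset by blast
  have fBf: "finite (Bf y)" if "y \<in> A1" for y using Bf that fT finite_subset by blast
  have fP: "finite P" unfolding P_def using fA1 fBf by auto
  have PA: "P \<subseteq> A \<times> tpow k B" unfolding P_def using A1 Bf by auto
  have cP: "real (card P) = (\<Sum>y\<in>A1. real (card (Bf y)))"
    unfolding P_def using fA1 fBf by simp
  have c1: "real (card {(p,q). p\<in>P \<and> q\<in>P \<and> hadd k p = hadd k q}) \<le> Ej (k+1) A B"
  proof -
    have "real (card {(p,q). p\<in>P \<and> q\<in>P \<and> hadd k p = hadd k q}) \<le> (\<Sum>pr\<in>A\<times>A. real (circ B (fst pr - snd pr))^k)"
      by (rule coll_bound[OF fA fB PA]) (rule hadd_eq)
    then show ?thesis unfolding negsum Esum[OF fA] .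
  qed
  have c2: "real (card {(p,q). p\<in>P \<and> q\<in>P \<and> hsub k p = hsub k q}) \<le> Ej (k+1) A B"
  proof -
    have "real (card {(p,q). p\<in>P \<and> q\<in>P \<and> hsub k p = hsub k q}) \<le> (\<Sum>pr\<in>A\<times>A. real (circ B (snd pr - fst pr))^k)"
      by (rule coll_bound[OF fA fB PA]) (rule hsub_eq)
    then show ?thesis unfolding Esum[OF fA] .
  qed
  have r1: "real (card P)^2 / Ej (k+1) A B \<le> real (card (hadd k ` P))"
    by (rule ratio_bound2[OF coll_CS[OF fP] c1 _ Enonneg]) simp
  have r2: "real (card P)^2 / Ej (k+1) A B \<le> real (card (hsub k ` P))"
    by (rule ratio_bound2[OF coll_CS[OF fP] c2 _ Enonneg]) simp
  show ?thesis using r1 r2 unfolding U_add U_sub P_def[symmetric] cP by simp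
qed




theorem theorem42:
  fixes A B :: "'a::ab_group_add set" and k :: nat
  assumes "finite A" "A \<noteq> {}" "finite B" "B \<noteq> {}" "k \<ge> 1"
  shows "Rk k B A \<ge> real (card B) ^ (2 * k) / (lambda1 A B k)^2
       \<and> Rk k B A \<ge> real (card B) ^ (2 * k) / sqrt (Ej (2 * k + 1) A B)
       \<and> (\<forall>A1 Bf. A1 \<subseteq> A \<and> (\<forall>y\<in>A1. Bf y \<subseteq> tpow k B) \<longrightarrow>
           real (card (\<Union>y\<in>A1. tsumset k (Bf y) (Delta k {y})))
             \<ge> (\<Sum>y\<in>A1. real (card (Bf y)))^2 / Ej (k + 1) A B
         \<and> real (card (\<Union>y\<in>A1. tdiffset k (Bf y) (Delta k {y})))
             \<ge> (\<Sum>y\<in>A1. real (card (Bf y)))^2 / Ej (k + 1) A B)"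
proof -
  define g where "g Z = real (card (tsumset k (tpow k B) (Delta k Z))) / real (card Z)" for Z
  define G where "G = {g Z | Z. Z \<noteq> {} \<and> Z \<subseteq> A}"
  have RkG: "Rk k B A = Min G" unfolding Rk_def G_def g_def by simp
  have finG: "finite G"
  proof -
    have "G \<subseteq> g ` Pow A" unfolding G_def by blast
    moreover have "finite (g ` Pow A)" using assms(1) by simp
    ultimately show ?thesis by (rule finite_subset)
  qed
  have neG: "G \<noteq> {}" using assms(2) unfolding G_def by blast
  obtain Z where Z: "Z \<noteq> {}" "Z \<subseteq> A" "Rk k B A = g Z"
    using Min_in[OF finG neG] RkG unfolding G_def by auto
  have p1: "Rk k B A \<ge> real (card B) ^ (2 * k) / (lambda1 A B k)^2"
    using part1_Z[OF assms(1,3) Z(1,2), of k] Z(3) unfolding g_def by simp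
  have p2: "Rk k B A \<ge> real (card B) ^ (2 * k) / sqrt (Ej (2 * k + 1) A B)"
    using part2_Z[OF assms(1,3) Z(1,2), of k] Z(3) unfolding g_def by simp
  show ?thesis using p1 p2 part3[OF assms(1,3)] by blast
qed


end
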